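(* Let $f:\mathbb{R}^+\to\mathbb{R}$ be twice continuously differentiable with $f>0$, $f'>0$, $f''>0$, and assume there exist $c_1\geq 1/2$ and $c_2>0$ such that $c_1f''(x)\leq f''(y)\leq c_2f''(x)$ for $0<x\leq y\leq 2x$. Then, with implied constants depending only on $f$: (i) $xf''(x)\ll yf''(y)$ for $0<x\leq y$; (ii) $xf''(x)\ll f'(x)\ll xf''(x)\log x$ for $x\geq 2$; (iii) $f'(x)\leq f'(y)\ll f'(x)$ for $0<x\leq y\leq 2x$; (iv) there is $\delta\geq 0$ such that $\log x\ll f'(x)\ll x^\delta$ for all $x\geq 2$; (v) for $0<x\leq a\leq b\leq 2x$ we have $f(b)-f(a)\asymp f'(x)(b-a)$ and $f'(b)-f'(a)\asymp f''(x)(b-a)$.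
   Context: $F\ll G$ means $|F|\leq C G$ for a constant $C$; $F\asymp G$ means $F\ll G$ and $G\ll F$. *)

theory Defs
  imports "HOL-Analysis.Analysis"
begin

end

theory Submission
  imports Defs
begin

lemma deriv_nonpos_le:
  fixes g g' :: "real \<Rightarrow> real"
  assumes "a \<le> b"
    and "\<And>t. a \<le> t \<Longrightarrow> t \<le> b \<Longrightarrow> (g has_real_derivative g' t) (at t)"
    and "\<And>t. a \<le> t \<Longrightarrow> t \<le> b \<Longrightarrow> g' t \<le> 0"
  shows "g b \<le> g a"
proof (cases "a = b")
  case False
  then have "a < b" using assms(1) by simp
  from MVT2[OF this, of g g'] assms(2) obtain z where z: "a < z" "z < b" "g b - g a = (b - a) * g' z"
    by blast
  have "g' z \<le> 0" using assms(3) z by simp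
  then have "(b - a) * g' z \<le> 0" using \<open>a < b\<close> by (simp add: mult_nonneg_nonpos)
  then show ?thesis using z by simp
qed simp

theorem lemma7:
  fixes f f' f'' :: "real \<Rightarrow> real"
  assumes d1: "\<And>x. x > 0 \<Longrightarrow> (f has_real_derivative f' x) (at x)"
      and d2: "\<And>x. x > 0 \<Longrightarrow> (f' has_real_derivative f'' x) (at x)"
      and cont2: "continuous_on {0<..} f''"
      and pos0: "\<And>x. x > 0 \<Longrightarrow> f x > 0"
      and pos1: "\<And>x. x > 0 \<Longrightarrow> f' x > 0"
      and pos2: "\<And>x. x > 0 \<Longrightarrow> f'' x > 0"
      and reg: "\<exists>c1 c2. c1 \<ge> 1/2 \<and> c2 > 0 \<and>
                  (\<forall>x y. 0 < x \<and> x \<le> y \<and> y \<le> 2*x \<longrightarrow>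
                       c1 * f'' x \<le> f'' y \<and> f'' y \<le> c2 * f'' x)"
  shows
    "(\<exists>C. \<forall>x y. 0 < x \<and> x \<le> y \<longrightarrow> \<bar>x * f'' x\<bar> \<le> C * (y * f'' y))
     \<and> (\<exists>C. \<forall>x. x \<ge> 2 \<longrightarrow>
            \<bar>x * f'' x\<bar> \<le> C * f' x \<and> \<bar>f' x\<bar> \<le> C * (x * f'' x * ln x))
     \<and> (\<exists>C. \<forall>x y. 0 < x \<and> x \<le> y \<and> y \<le> 2*x \<longrightarrow>
            f' x \<le> f' y \<and> \<bar>f' y\<bar> \<le> C * f' x)
     \<and> (\<exists>\<delta>\<ge>0. \<exists>C. \<forall>x. x \<ge> 2 \<longrightarrow>
            \<bar>ln x\<bar> \<le> C * f' x \<and> \<bar>f' x\<bar> \<le> C * x powr \<delta>)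
     \<and> (\<exists>C. \<forall>x a b. 0 < x \<and> x \<le> a \<and> a \<le> b \<and> b \<le> 2*x \<longrightarrow>
            \<bar>f b - f a\<bar> \<le> C * (f' x * (b - a)) \<and> \<bar>f' x * (b - a)\<bar> \<le> C * (f b - f a)
          \<and> \<bar>f' b - f' a\<bar> \<le> C * (f'' x * (b - a)) \<and> \<bar>f'' x * (b - a)\<bar> \<le> C * (f' b - f' a))"
proof -
  obtain c1 c2 where c1: "c1 \<ge> 1/2" and c2: "c2 > 0" and
    R: "\<And>x y. 0 < x \<Longrightarrow> x \<le> y \<Longrightarrow> y \<le> 2*x \<Longrightarrow> c1 * f'' x \<le> f'' y \<and> f'' y \<le> c2 * f'' x"
    using reg by blast
  have Rl: "f'' x \<le> 2 * f'' y" if "0 < x" "x \<le> y" "y \<le> 2*x" for x y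
  proof -
    have "c1 * f'' x \<le> f'' y" using R[OF that] by simp
    moreover have "f'' x / 2 \<le> c1 * f'' x" using c1 pos2[OF \<open>0<x\<close>] by (simp add: mult_right_mono)
    ultimately show ?thesis by simp
  qed
  have Ru: "f'' y \<le> c2 * f'' x" if "0 < x" "x \<le> y" "y \<le> 2*x" for x y
    using R[OF that] by simp
  have A: "x * f'' x \<le> 2 * c2 * f' x" if "x > 0" for x
  proof -
    have "x/2 < x" using that by simp
    have "\<And>t. x/2 \<le> t \<Longrightarrow> t \<le> x \<Longrightarrow> (f' has_real_derivative f'' t) (at t)"
      using that by (intro d2) simp
    from MVT2[OF \<open>x/2 < x\<close> this] obtain z where z: "x/2 < z" "z < x"
      "f' x - f' (x/2) = (x - x/2) * f'' z" by blast
    have "f'' x \<le> c2 * f'' z" using Ru[of z x] z that by simp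
    then have "x * f'' x \<le> x * (c2 * f'' z)" using that by (simp add: mult_left_mono)
    also have "\<dots> = 2 * c2 * ((x - x/2) * f'' z)" by (simp add: field_simps)
    also have "\<dots> \<le> 2 * c2 * f' x" using z pos1[of "x/2"] that c2 by simp
    finally show ?thesis .
  qed
  have Ipow: "\<forall>x y. 0 < x \<and> x \<le> y \<and> y \<le> 2^n * x \<longrightarrow> x * f'' x \<le> 2 * (y * f'' y)" for n :: nat
  proof (induction n)
    case 0
    then show ?case using pos2 by (auto simp: mult_right_mono)
  next
    case (Suc n)
    show ?case
    proof (intro allI impI)
      fix x y :: real assume h: "0 < x \<and> x \<le> y \<and> y \<le> 2 ^ Suc n * x"
      show "x * f'' x \<le> 2 * (y * f'' y)"
      proof (cases "y \<le> 2*x")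
        case True
        have "f'' x \<le> 2 * f'' y" using Rl h True by simp
        then have "x * f'' x \<le> x * (2 * f'' y)" using h by (simp add: mult_left_mono)
        also have "\<dots> \<le> y * (2 * f'' y)" using h pos2[of y] by (intro mult_right_mono) auto
        finally show ?thesis by simp
      next
        case False
        have "y \<le> 2^n * (2*x)" using h by (simp add: ac_simps)
        then have "2*x * f'' (2*x) \<le> 2 * (y * f'' y)" using Suc.IH h False by auto
        moreover have "f'' x \<le> 2 * f'' (2*x)" using Rl[of x "2*x"] h by simp
        then have "x * f'' x \<le> 2*x * f'' (2*x)" using h by (simp add: mult_left_mono)
        ultimately show ?thesis by linarith
      qed
    qed
  qed
  have I: "x * f'' x \<le> 2 * (y * f'' y)" if "0 < x" "x \<le> y" for x y
  proof -
    obtain n where "y / x < 2 ^ n" using real_arch_pow[of 2 "y/x"] by auto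
    then have "y \<le> 2^n * x" using that by (simp add: divide_less_eq)
    then show ?thesis using Ipow[of n] that by blast
  qed
  have mono1: "f' x \<le> f' y" if "0 < x" "x \<le> y" for x y
  proof -
    have D: "\<And>t. x \<le> t \<Longrightarrow> t \<le> y \<Longrightarrow> ((\<lambda>t. - f' t) has_real_derivative - f'' t) (at t)"
      using that by (intro DERIV_minus d2) simp
    have N: "\<And>t. x \<le> t \<Longrightarrow> t \<le> y \<Longrightarrow> - f'' t \<le> 0"
      using that pos2 by (simp add: less_imp_le)
    show ?thesis using deriv_nonpos_le[of x y "\<lambda>t. - f' t" "\<lambda>t. - f'' t", OF that(2) D N] by simp
  qed
  define K where "K = 2 * f' 1 / (f'' 1 * ln 2)"
  have Kpos: "K > 0" unfolding K_def using pos1[of 1] pos2[of 1] by simp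
  have Aup: "f' x \<le> (2 + K) * (x * f'' x * ln x)" if "x \<ge> 2" for x
  proof -
    define L where "L = 2 * (x * f'' x)"
    have step: "f' x - L * ln x \<le> f' 1 - L * ln 1"
    proof (rule deriv_nonpos_le[where g = "\<lambda>t. f' t - L * ln t" and g' = "\<lambda>t. f'' t - L / t"])
      show "1 \<le> x" using that by simp
      fix t :: real assume t: "1 \<le> t" "t \<le> x"
      show "((\<lambda>t. f' t - L * ln t) has_real_derivative f'' t - L / t) (at t)"
        using t d2[of t] by (auto intro!: derivative_eq_intros simp: field_simps)
      have "t * f'' t \<le> L" unfolding L_def using I[of t x] t by simp
      then show "f'' t - L / t \<le> 0" using t by (simp add: field_simps)
    qed
    then have e1: "f' x \<le> f' 1 + L * ln x" by simp
    have "f'' 1 \<le> 2 * (x * f'' x)" using I[of 1 x] that by simp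
    have ln2: "ln 2 \<le> ln x" "0 < ln (2::real)" using that by auto
    have "f' 1 = K * (f'' 1 * ln 2) / 2" unfolding K_def using pos2[of 1] by (simp add: field_simps)
    also have "\<dots> \<le> K * (2 * (x * f'' x) * ln x) / 2"
      using Kpos \<open>f'' 1 \<le> _\<close> ln2 pos2[of 1]
      by (intro divide_right_mono mult_left_mono mult_mono) auto
    finally have "f' 1 \<le> K * (x * f'' x * ln x)" by simp
    with e1 show ?thesis unfolding L_def by (simp add: algebra_simps)
  qed
  have Llow: "ln x \<le> (2 / f'' 1) * f' x" if "x \<ge> 2" for x
  proof -
    define L where "L = f'' 1 / 2"
    have step: "L * ln x - f' x \<le> L * ln 1 - f' 1"
    proof (rule deriv_nonpos_le[where g = "\<lambda>t. L * ln t - f' t" and g' = "\<lambda>t. L / t - f'' t"])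
      show "1 \<le> x" using that by simp
      fix t :: real assume t: "1 \<le> t" "t \<le> x"
      show "((\<lambda>t. L * ln t - f' t) has_real_derivative L / t - f'' t) (at t)"
        using t d2[of t] by (auto intro!: derivative_eq_intros simp: field_simps)
      have "L \<le> t * f'' t" unfolding L_def using I[of 1 t] t by simp
      then show "L / t - f'' t \<le> 0" using t by (simp add: field_simps)
    qed
    then have "L * ln x \<le> f' x - f' 1" by simp
    then have "L * ln x \<le> f' x" using pos1[of 1] by simp
    then show ?thesis unfolding L_def using pos2[of 1] by (simp add: field_simps)
  qed
  define \<delta> where "\<delta> = 2 * c2"
  have Lup: "f' x \<le> f' 1 * x powr \<delta>" if "x \<ge> 2" for x
  proof -
    have step: "ln (f' x) - \<delta> * ln x \<le> ln (f' 1) - \<delta> * ln 1"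
    proof (rule deriv_nonpos_le[where g = "\<lambda>t. ln (f' t) - \<delta> * ln t" and g' = "\<lambda>t. f'' t / f' t - \<delta> / t"])
      show "1 \<le> x" using that by simp
      fix t :: real assume t: "1 \<le> t" "t \<le> x"
      show "((\<lambda>t. ln (f' t) - \<delta> * ln t) has_real_derivative f'' t / f' t - \<delta> / t) (at t)"
        using t d2[of t] pos1[of t] by (auto intro!: derivative_eq_intros simp: field_simps)
      have "t * f'' t \<le> \<delta> * f' t" unfolding \<delta>_def using A[of t] t by simp
      then show "f'' t / f' t - \<delta> / t \<le> 0" using t pos1[of t] by (simp add: field_simps)
    qed
    then have "ln (f' x) \<le> ln (f' 1) + \<delta> * ln x" by simp
    then have "exp (ln (f' x)) \<le> exp (ln (f' 1) + \<delta> * ln x)" by simp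
    then show ?thesis using pos1[of x] pos1[of 1] that
      by (simp add: exp_add powr_def)
  qed
  define C3 where "C3 = 1 + 2 * c2 * c2"
  have iii: "f' y \<le> C3 * f' x" if "0 < x" "x \<le> y" "y \<le> 2*x" for x y
  proof (cases "x = y")
    case True then show ?thesis unfolding C3_def using pos1[of x] that c2 by simp
  next
    case False
    then have "x < y" using that by simp
    have "\<And>t. x \<le> t \<Longrightarrow> t \<le> y \<Longrightarrow> (f' has_real_derivative f'' t) (at t)"
      using that by (intro d2) simp
    from MVT2[OF \<open>x < y\<close> this] obtain z where z: "x < z" "z < y"
      "f' y - f' x = (y - x) * f'' z" by blast
    have "f'' z \<le> c2 * f'' x" using Ru[of x z] z that by simp
    then have "(y - x) * f'' z \<le> x * (c2 * f'' x)"
      using that z pos2[of z] by (intro mult_mono) auto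
    also have "\<dots> = c2 * (x * f'' x)" by simp
    also have "\<dots> \<le> c2 * (2 * c2 * f' x)" using A[OF that(1)] c2 by simp
    finally show ?thesis unfolding C3_def using z by (simp add: algebra_simps)
  qed
  show ?thesis
  proof (intro conjI)
    show "\<exists>C. \<forall>x y. 0 < x \<and> x \<le> y \<longrightarrow> \<bar>x * f'' x\<bar> \<le> C * (y * f'' y)"
    proof (intro exI[of _ 2] allI impI)
      fix x y :: real assume h: "0 < x \<and> x \<le> y"
      have "0 < x * f'' x" using h pos2[of x] by simp
      then show "\<bar>x * f'' x\<bar> \<le> 2 * (y * f'' y)" using I[of x y] h by simp
    qed
    show "\<exists>C. \<forall>x. x \<ge> 2 \<longrightarrow>
            \<bar>x * f'' x\<bar> \<le> C * f' x \<and> \<bar>f' x\<bar> \<le> C * (x * f'' x * ln x)"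
    proof (intro exI[of _ "max (2*c2) (2 + K)"] allI impI conjI)
      fix x :: real assume x: "x \<ge> 2"
      have p: "f' x > 0" "f'' x > 0" "ln x > 0" using pos1 pos2 x by auto
      have "\<bar>x * f'' x\<bar> = x * f'' x" using p x by simp
      also have "\<dots> \<le> 2 * c2 * f' x" using A x by simp
      also have "\<dots> \<le> max (2*c2) (2 + K) * f' x" using p by (intro mult_right_mono) auto
      finally show "\<bar>x * f'' x\<bar> \<le> max (2*c2) (2 + K) * f' x" .
      have "\<bar>f' x\<bar> = f' x" using p by simp
      also have "\<dots> \<le> (2 + K) * (x * f'' x * ln x)" using Aup x by simp
      also have "\<dots> \<le> max (2*c2) (2 + K) * (x * f'' x * ln x)" using p x by (intro mult_right_mono) auto
      finally show "\<bar>f' x\<bar> \<le> max (2*c2) (2 + K) * (x * f'' x * ln x)" .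
    qed
    show "\<exists>C. \<forall>x y. 0 < x \<and> x \<le> y \<and> y \<le> 2*x \<longrightarrow>
            f' x \<le> f' y \<and> \<bar>f' y\<bar> \<le> C * f' x"
    proof (intro exI[of _ C3] allI impI conjI)
      fix x y :: real assume h: "0 < x \<and> x \<le> y \<and> y \<le> 2*x"
      show "f' x \<le> f' y" using mono1 h by simp
      have "0 < f' y" using pos1[of y] h by simp
      then show "\<bar>f' y\<bar> \<le> C3 * f' x" using iii[of x y] h by simp
    qed
    show "\<exists>\<delta>\<ge>0. \<exists>C. \<forall>x. x \<ge> 2 \<longrightarrow>
            \<bar>ln x\<bar> \<le> C * f' x \<and> \<bar>f' x\<bar> \<le> C * x powr \<delta>"
    proof (rule exI[of _ \<delta>], rule conjI)
      show "\<delta> \<ge> 0" unfolding \<delta>_def using c2 by simp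
    next
      show "\<exists>C. \<forall>x. x \<ge> 2 \<longrightarrow>
            \<bar>ln x\<bar> \<le> C * f' x \<and> \<bar>f' x\<bar> \<le> C * x powr \<delta>"
      proof (intro exI[of _ "max (2 / f'' 1) (f' 1)"] allI impI conjI)
      fix x :: real assume x: "x \<ge> 2"
      have p: "f' x > 0" "ln x > 0" "x powr \<delta> > 0" using pos1 x by auto
      have "\<bar>ln x\<bar> = ln x" using p by simp
      also have "\<dots> \<le> (2 / f'' 1) * f' x" using Llow x by simp
      also have "\<dots> \<le> max (2 / f'' 1) (f' 1) * f' x" using p by (intro mult_right_mono) auto
      finally show "\<bar>ln x\<bar> \<le> max (2 / f'' 1) (f' 1) * f' x" .
      have "\<bar>f' x\<bar> = f' x" using p by simp
      also have "\<dots> \<le> f' 1 * x powr \<delta>" using Lup x by simp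
      also have "\<dots> \<le> max (2 / f'' 1) (f' 1) * x powr \<delta>" using p by (intro mult_right_mono) auto
      finally show "\<bar>f' x\<bar> \<le> max (2 / f'' 1) (f' 1) * x powr \<delta>" .
      qed
    qed
    show "\<exists>C. \<forall>x a b. 0 < x \<and> x \<le> a \<and> a \<le> b \<and> b \<le> 2*x \<longrightarrow>
            \<bar>f b - f a\<bar> \<le> C * (f' x * (b - a)) \<and> \<bar>f' x * (b - a)\<bar> \<le> C * (f b - f a)
          \<and> \<bar>f' b - f' a\<bar> \<le> C * (f'' x * (b - a)) \<and> \<bar>f'' x * (b - a)\<bar> \<le> C * (f' b - f' a)"
    proof (intro exI[of _ "max C3 (max c2 2)"] allI impI)
      fix x a b :: real assume h: "0 < x \<and> x \<le> a \<and> a \<le> b \<and> b \<le> 2*x"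
      define M where "M = max C3 (max c2 2)"
      have M: "C3 \<le> M" "c2 \<le> M" "2 \<le> M" "1 \<le> M" unfolding M_def by auto
      have px: "f' x > 0" "f'' x > 0" using pos1 pos2 h by auto
      show "\<bar>f b - f a\<bar> \<le> M * (f' x * (b - a)) \<and> \<bar>f' x * (b - a)\<bar> \<le> M * (f b - f a)
          \<and> \<bar>f' b - f' a\<bar> \<le> M * (f'' x * (b - a)) \<and> \<bar>f'' x * (b - a)\<bar> \<le> M * (f' b - f' a)"
      proof (cases "a = b")
        case True then show ?thesis by simp
      next
        case False
        then have ab: "a < b" using h by simp
        have D1: "\<And>t. a \<le> t \<Longrightarrow> t \<le> b \<Longrightarrow> (f has_real_derivative f' t) (at t)"
          using h by (intro d1) simp
        have D2: "\<And>t. a \<le> t \<Longrightarrow> t \<le> b \<Longrightarrow> (f' has_real_derivative f'' t) (at t)"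
          using h by (intro d2) simp
        from MVT2[OF ab D1] obtain z where z: "a < z" "z < b"
          "f b - f a = (b - a) * f' z" by blast
        from MVT2[OF ab D2] obtain w where w: "a < w" "w < b"
          "f' b - f' a = (b - a) * f'' w" by blast
        have z1: "f' x \<le> f' z" using mono1[of x z] h z by simp
        have z2: "f' z \<le> C3 * f' x" using iii[of x z] h z by simp
        have w1: "f'' x \<le> 2 * f'' w" using Rl[of x w] h w by simp
        have w2: "f'' w \<le> c2 * f'' x" using Ru[of x w] h w by simp
        have ba: "b - a > 0" using ab by simp
        have C3p: "C3 > 0" unfolding C3_def using c2 by (simp add: add_pos_nonneg)
        have "\<bar>f b - f a\<bar> = (b - a) * f' z" using z ba pos1[of z] h by simp
        also have "\<dots> \<le> (b - a) * (C3 * f' x)" using z2 ba by simp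
        also have "\<dots> \<le> M * (f' x * (b - a))" using M(1) px ba
          by (simp add: mult_right_mono mult.commute mult.left_commute)
        finally have g1: "\<bar>f b - f a\<bar> \<le> M * (f' x * (b - a))" .
        have "\<bar>f' x * (b - a)\<bar> = (b - a) * f' x" using px ba by simp
        also have "\<dots> \<le> (b - a) * f' z" using z1 ba by simp
        also have "\<dots> \<le> M * ((b - a) * f' z)"
        proof -
          have "0 \<le> (b - a) * f' z" using ba pos1[of z] z h by simp
          then show ?thesis using M(4) by (simp add: mult_le_cancel_right1)
        qed
        also have "\<dots> = M * (f b - f a)" using z(3) by simp
        finally have g2: "\<bar>f' x * (b - a)\<bar> \<le> M * (f b - f a)" .
        have "\<bar>f' b - f' a\<bar> = (b - a) * f'' w" using w ba pos2[of w] h by simp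
        also have "\<dots> \<le> (b - a) * (c2 * f'' x)" using w2 ba by simp
        also have "\<dots> \<le> M * (f'' x * (b - a))" using M(2) px ba
          by (simp add: mult_right_mono mult.commute mult.left_commute)
        finally have g3: "\<bar>f' b - f' a\<bar> \<le> M * (f'' x * (b - a))" .
        have "\<bar>f'' x * (b - a)\<bar> = (b - a) * f'' x" using px ba by simp
        also have "\<dots> \<le> (b - a) * (2 * f'' w)" using w1 ba by simp
        also have "\<dots> = 2 * (f' b - f' a)" using w(3) by simp
        also have "\<dots> \<le> M * (f' b - f' a)"
          using M(3) w(3) ba pos2[of w] h w by (intro mult_right_mono) auto
        finally have g4: "\<bar>f'' x * (b - a)\<bar> \<le> M * (f' b - f' a)" .
        show ?thesis using g1 g2 g3 g4 by blast
      qed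
    qed
  qed
qed

end
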